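(* For any $0\le t<1$ and $x\in\mathbb{R}$, $J^*(t,x)\ge g(t,x)$, where $$J^*(t,x)=\begin{cases}(1-t)^{n+1/2}(F_{2n+1}+G_{2n+1})(x/\sqrt{1-t})\,j(B^* ), & |x|<B^*\sqrt{1-t},\\ g(t,x), & |x|\ge B^*\sqrt{1-t}.\end{cases}$$
   Context: $n\ge0$ is an integer. $F_q(y):=\int_0^\infty u^{q-1}e^{yu-u^2/2}\,\mathrm{d}u$ and $G_q(y):=F_q(-y)$. $B^*>0$ is the unique zero of $B\mapsto(2n+1)-BF'_{2n+1}(B)/F_{2n+1}(B)$; it maximizes $B\mapsto B^{2n+1}/F_{2n+1}(B)$. $U(t,x)=(1-t)^{n+1/2}(B^* )^{2n+1}F_{2n+1}(x/\sqrt{1-t})/F_{2n+1}(B^* )$ if $x<B^*\sqrt{1-t}$, and $U(t,x)=x^{2n+1}$ otherwise. $g(t,x):=(U(t,x)-x^{2n+1})1_{\{x\le0\}}+(U(t,-x)+x^{2n+1})1_{\{x>0\}}$. $j(D):=\frac{1}{(F_{2n+1}+G_{2n+1})(D)}[D^{2n+1}+(B^* )^{2n+1}G_{2n+1}(D)/F_{2n+1}(B^* )]$ for $D\ge0$. *)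

theory Defs
  imports "HOL-Analysis.Analysis"
begin

definition F :: "nat \<Rightarrow> real \<Rightarrow> real" where
  "F q y = integral {0..} (\<lambda>u::real. u ^ (q - 1) * exp (y * u - u\<^sup>2 / 2))"

definition G :: "nat \<Rightarrow> real \<Rightarrow> real" where
  "G q y = F q (- y)"

definition Bstar :: "nat \<Rightarrow> real" where
  "Bstar n = (THE B. B > 0 \<and>
      real (2*n+1) - B * deriv (F (2*n+1)) B / F (2*n+1) B = 0)"

definition U :: "nat \<Rightarrow> real \<Rightarrow> real \<Rightarrow> real" where
  "U n t x = (if x < Bstar n * sqrt (1 - t)
     then (1 - t) powr (real n + 1/2) * (Bstar n) ^ (2*n+1)
          * F (2*n+1) (x / sqrt (1 - t)) / F (2*n+1) (Bstar n)
     else x ^ (2*n+1))"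

definition g :: "nat \<Rightarrow> real \<Rightarrow> real \<Rightarrow> real" where
  "g n t x = (if x \<le> 0 then U n t x - x ^ (2*n+1) else U n t (- x) + x ^ (2*n+1))"

definition j :: "nat \<Rightarrow> real \<Rightarrow> real" where
  "j n D = (D ^ (2*n+1) + (Bstar n) ^ (2*n+1) * G (2*n+1) D / F (2*n+1) (Bstar n))
           / (F (2*n+1) D + G (2*n+1) D)"

definition Jstar :: "nat \<Rightarrow> real \<Rightarrow> real \<Rightarrow> real" where
  "Jstar n t x = (if \<bar>x\<bar> < Bstar n * sqrt (1 - t)
     then (1 - t) powr (real n + 1/2)
          * (F (2*n+1) (x / sqrt (1 - t)) + G (2*n+1) (x / sqrt (1 - t))) * j n (Bstar n)
     else g n t x)"

end

theory Submission imports Defs "HOL-Real_Asymp.Real_Asymp" begin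

definition w :: "nat \<Rightarrow> real \<Rightarrow> real \<Rightarrow> real" where
  "w k z u = u^(k-1) * exp (z*u - u^2/2)"

lemma F_w: "F k z = integral {0..} (w k z)"
  by (simp add: F_def w_def[abs_def])

lemma w_cont: "continuous_on S (w k z)"
  unfolding w_def by (intro continuous_intros) auto

lemma w_nonneg: "0 \<le> u \<Longrightarrow> 0 \<le> w k z u"
  unfolding w_def by simp

lemma w_bound:
  assumes "\<bar>z\<bar> \<le> M" "0 \<le> u"
  shows "\<bar>w k z u\<bar> \<le> exp ((M + real k + 1)^2/2) * exp (-u)"
proof -
  have "u \<le> exp u" using exp_ge_add_one_self[of u] by linarith
  hence "u^(k-1) \<le> (exp u)^(k-1)" using assms(2) by (intro power_mono) auto
  also have "\<dots> = exp (real (k-1) * u)" by (simp add: exp_of_nat_mult)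
  also have "\<dots> \<le> exp (real k * u)" using assms(2) by (intro exp_mono mult_right_mono) auto
  finally have p: "u^(k-1) \<le> exp (real k * u)" .
  have zu: "z*u \<le> M*u" using assms by (intro mult_right_mono) auto
  have "\<bar>w k z u\<bar> = u^(k-1) * exp (z*u - u^2/2)" using assms(2) by (simp add: w_def)
  also have "\<dots> \<le> exp (real k * u) * exp (M*u - u^2/2)"
    using p zu by (intro mult_mono) auto
  also have "\<dots> = exp ((M + real k + 1)*u - u^2/2) * exp (-u)"
    by (simp flip: exp_add add: algebra_simps)
  also have "\<dots> \<le> exp ((M + real k + 1)^2/2) * exp (-u)"
  proof -
    have "(M + real k + 1)*u - u^2/2 \<le> (M + real k + 1)^2/2"
      using sum_squares_ge_zero[of "M + real k + 1 - u" 0]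
      by (simp add: power2_eq_square algebra_simps)
    thus ?thesis by simp
  qed
  finally show ?thesis .
qed

lemma w_integrable: "w k z integrable_on {0..}"
proof (rule integrable_on_all_intervals_integrable_bound)
  fix a b :: real
  have "w k z integrable_on {max 0 a..b}"
    by (intro integrable_continuous_interval w_cont)
  moreover have "{0..} \<inter> cbox a b = {max 0 a..b}" by auto
  ultimately show "(\<lambda>x. if x \<in> {0..} then w k z x else 0) integrable_on cbox a b"
    unfolding integrable_restrict_Int by simp
next
  fix x :: real assume "x \<in> {0..}"
  thus "norm (w k z x) \<le> exp ((\<bar>z\<bar> + real k + 1)^2/2) * exp (-1 * x)"
    using w_bound[of z "\<bar>z\<bar>" x k] by simp
next
  show "(\<lambda>x. exp ((\<bar>z\<bar> + real k + 1)^2/2) * exp (-1 * x)) integrable_on {0..}"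
    by (intro integrable_on_mult_right integrable_on_exp_minus_to_infinity) auto
qed

lemma tail:
  assumes "\<bar>z\<bar> \<le> M" "0 \<le> T"
  shows "\<bar>F k z - integral {0..T} (w k z)\<bar> \<le> 2 * exp ((M + real k + 1)^2/2) * exp (-T/2)"
proof -
  define C where "C = exp ((M + real k + 1)^2/2)"
  define r where "r = (\<lambda>u. if u \<in> {0..T} then w k z u else 0)"
  have "w k z integrable_on {0..T}" by (intro integrable_continuous_interval w_cont)
  hence r: "(r has_integral integral {0..T} (w k z)) {0..}"
    unfolding r_def by (subst has_integral_restrict) auto
  define d where "d = (\<lambda>u. w k z u - r u)"
  have dI: "(d has_integral (F k z - integral {0..T} (w k z))) {0..}"
    unfolding d_def F_w by (intro has_integral_diff r integrable_integral w_integrable)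
  have bI: "((\<lambda>u. C * exp (-T/2) * exp (-(1/2)*u)) has_integral (C * exp (-T/2) * 2)) {0..}"
    using has_integral_mult_right[OF has_integral_exp_minus_to_infinity[of "1/2" 0], of "C * exp (-T/2)"]
    by simp
  have "norm (integral {0..} d) \<le> integral {0..} (\<lambda>u. C * exp (-T/2) * exp (-(1/2)*u))"
  proof (rule integral_norm_bound_integral)
    show "d integrable_on {0..}" using dI by blast
    show "(\<lambda>u. C * exp (-T/2) * exp (-(1/2)*u)) integrable_on {0..}" using bI by blast
  next
    fix u :: real assume u: "u \<in> {0..}"
    show "norm (d u) \<le> C * exp (-T/2) * exp (-(1/2)*u)"
    proof (cases "u \<le> T")
      case True thus ?thesis using u by (simp add: d_def r_def C_def)
    next
      case False
      have "norm (d u) = \<bar>w k z u\<bar>" using False by (simp add: d_def r_def)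
      also have "\<dots> \<le> C * exp (-u)" using w_bound[OF assms(1), of u k] u by (simp add: C_def)
      also have "exp (-u) = exp (-u/2) * exp (-(1/2)*u)" by (simp flip: exp_add)
      also have "C * (exp (-u/2) * exp (-(1/2)*u)) \<le> C * (exp (-T/2) * exp (-(1/2)*u))"
        using False by (intro mult_left_mono mult_right_mono) (auto simp: C_def)
      finally show ?thesis by simp
    qed
  qed
  also have "\<dots> = C * exp (-T/2) * 2" using bI by blast
  finally show ?thesis using dI by (simp add: C_def integral_unique mult_ac)
qed

lemma unif:
  assumes "e > 0"
  shows "\<forall>\<^sub>F n in sequentially. \<forall>y. \<bar>y\<bar> \<le> M \<longrightarrow> \<bar>F k y - integral {0..real n} (w k y)\<bar> \<le> e"
proof -
  define C where "C = exp ((M + real k + 1)^2/2)"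
  have "(\<lambda>n. 2 * C * exp (-real n/2)) \<longlonglongrightarrow> 0" by real_asymp
  hence "\<forall>\<^sub>F n in sequentially. 2 * C * exp (-real n/2) < e"
    using assms by (simp add: order_tendsto_iff)
  thus ?thesis
  proof (rule eventually_mono)
    fix n assume n: "2 * C * exp (-real n/2) < e"
    show "\<forall>y. \<bar>y\<bar> \<le> M \<longrightarrow> \<bar>F k y - integral {0..real n} (w k y)\<bar> \<le> e"
      using tail[of _ M "real n" k] n by (force simp: C_def)
  qed
qed

lemma F_deriv:
  assumes "k \<ge> 1"
  shows "(F k has_real_derivative F (Suc k) z) (at z)"
proof -
  define M where "M = \<bar>z\<bar> + 1"
  define S where "S = {-M<..<M}"
  have zS: "z \<in> S" and oS: "open S" and cS: "convex S" by (auto simp: S_def M_def)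
  define f where "f = (\<lambda>n y. integral {0..real n} (w k y))"
  define fD where "fD = (\<lambda>n y. integral {0..real n} (w (Suc k) y))"
  have der: "(f n has_field_derivative fD n y) (at y within S)" if "y \<in> S" for n y
  proof -
    have "((\<lambda>y. integral (cbox 0 (real n)) (w k y)) has_field_derivative
           integral (cbox 0 (real n)) (w (Suc k) y)) (at y within S)"
    proof (rule leibniz_rule_field_derivative[OF _ _ _ that cS])
      fix x :: real and t :: real
      assume "x \<in> S" "t \<in> cbox 0 (real n)"
      show "((\<lambda>x. w k x t) has_field_derivative w (Suc k) x t) (at x within S)"
        unfolding w_def
        apply (rule derivative_eq_intros refl)+
        using assms by (cases k) (auto simp: algebra_simps)
    next
      fix x show "w k x integrable_on cbox 0 (real n)"
        by (intro integrable_continuous w_cont)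
    next
      show "continuous_on (S \<times> cbox 0 (real n)) (\<lambda>(x, t). w (Suc k) x t)"
        unfolding w_def split_beta by (intro continuous_intros) auto
    qed
    thus ?thesis by (simp add: f_def fD_def)
  qed
  have lim: "(\<lambda>n. f n x) \<longlonglongrightarrow> F k x" for x
  proof (rule tendstoI)
    fix e :: real assume "e > 0"
    hence "e/2 > 0" by simp
    from unif[OF this, of "\<bar>x\<bar>" k] show "\<forall>\<^sub>F n in sequentially. dist (f n x) (F k x) < e"
      by (rule eventually_mono) (use \<open>e > 0\<close> in \<open>force simp: f_def dist_real_def abs_minus_commute\<close>)
  qed
  have "\<exists>g. \<forall>x\<in>S. (\<lambda>n. f n x) \<longlonglongrightarrow> g x \<and> (g has_derivative (*) (F (Suc k) x)) (at x within S)"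
  proof (rule has_derivative_sequence[OF cS _ _ zS])
    fix n x assume "x \<in> S"
    thus "(f n has_derivative (*) (fD n x)) (at x within S)"
      using der has_field_derivative_def by blast
  next
    fix e :: real assume "e > 0"
    show "\<forall>\<^sub>F n in sequentially. \<forall>x\<in>S. \<forall>h. norm (fD n x * h - F (Suc k) x * h) \<le> e * norm h"
      using unif[OF \<open>e > 0\<close>, of M "Suc k"]
    proof (rule eventually_mono)
      fix n assume n: "\<forall>y. \<bar>y\<bar> \<le> M \<longrightarrow> \<bar>F (Suc k) y - integral {0..real n} (w (Suc k) y)\<bar> \<le> e"
      show "\<forall>x\<in>S. \<forall>h. norm (fD n x * h - F (Suc k) x * h) \<le> e * norm h"
      proof (intro ballI allI)
        fix x h assume "x \<in> S"
        hence "\<bar>x\<bar> \<le> M" by (auto simp: S_def)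
        hence "\<bar>F (Suc k) x - fD n x\<bar> \<le> e" using n by (simp add: fD_def)
        hence "\<bar>fD n x - F (Suc k) x\<bar> * \<bar>h\<bar> \<le> e * \<bar>h\<bar>" by (intro mult_right_mono) auto
        thus "norm (fD n x * h - F (Suc k) x * h) \<le> e * norm h"
          by (simp add: abs_mult flip: left_diff_distrib)
      qed
    qed
  next
    show "(\<lambda>n. f n z) \<longlonglongrightarrow> F k z" by (rule lim)
  qed
  then obtain g where g: "\<And>x. x \<in> S \<Longrightarrow> (\<lambda>n. f n x) \<longlonglongrightarrow> g x \<and> (g has_derivative (*) (F (Suc k) x)) (at x within S)"
    by blast
  have gF: "g x = F k x" if "x \<in> S" for x
    using g[OF that] lim[of x] LIMSEQ_unique by blast
  have "(g has_field_derivative F (Suc k) z) (at z)"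
    using g[OF zS] at_within_open[OF zS oS] by (simp add: has_field_derivative_def)
  thus ?thesis
    by (rule has_field_derivative_transform_within_open[OF _ oS zS]) (use gF in auto)
qed

lemma F_pos: "0 < F k z"
proof -
  define c where "c = (1/2::real)^(k-1) * exp (-\<bar>z\<bar> - 1/2)"
  have c: "c > 0" by (simp add: c_def)
  have rI: "((\<lambda>u::real. if u \<in> {1/2..1} then c else 0) has_integral c/2) {0..}"
  proof -
    have c1: "((\<lambda>u. c) has_integral c/2) {1/2..(1::real)}"
      using has_integral_const_real[of c "1/2" "1::real"] by simp
    show ?thesis using has_integral_restrict[of "{1/2..1::real}" "{0..}" "\<lambda>u. c"] c1 by simp
  qed
  have "c/2 \<le> integral {0..} (w k z)"
  proof -
    have "integral {0..} (\<lambda>u::real. if u \<in> {1/2..1} then c else 0) \<le> integral {0..} (w k z)"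
    proof (rule integral_le)
      show "(\<lambda>u::real. if u \<in> {1/2..1} then c else 0) integrable_on {0..}" using rI by blast
      show "w k z integrable_on {0..}" by (rule w_integrable)
    next
      fix u :: real assume u: "u \<in> {0..}"
      show "(if u \<in> {1/2..1} then c else 0) \<le> w k z u"
      proof (cases "u \<in> {1/2..1}")
        case True
        hence "(1/2::real)^(k-1) \<le> u^(k-1)" by (intro power_mono) auto
        moreover have "-\<bar>z\<bar> - 1/2 \<le> z*u - u^2/2"
        proof -
          have "\<bar>z*u\<bar> \<le> \<bar>z\<bar>" using True by (auto simp: abs_mult intro: mult_left_le)
          moreover have "u^2 \<le> 1" using True by (simp add: power_le_one)
          ultimately show ?thesis by linarith
        qed
        ultimately have "c \<le> w k z u" unfolding c_def w_def
          using True by (intro mult_mono) auto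
        thus ?thesis using True by simp
      qed (use u w_nonneg in auto)
    qed
    thus ?thesis using rI integral_unique by metis
  qed
  thus ?thesis using c by (simp add: F_w)
qed

lemma F_CS:
  assumes "k \<ge> 1"
  shows "F (Suc k) z ^ 2 \<le> F (Suc (Suc k)) z * F k z"
proof -
  obtain m where k: "k = Suc m" using assms by (cases k) auto
  have key: "0 \<le> F (Suc (Suc k)) z - 2*l*F (Suc k) z + l^2 * F k z" for l
  proof -
    have I: "((\<lambda>u. w (Suc (Suc k)) z u - 2*l*w (Suc k) z u + l^2 * w k z u) has_integral
         (F (Suc (Suc k)) z - 2*l*F (Suc k) z + l^2 * F k z)) {0..}"
      unfolding F_w
      by (intro has_integral_add has_integral_diff has_integral_mult_right integrable_integral w_integrable)
    show ?thesis
    proof (rule has_integral_nonneg[OF I])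
      fix u :: real assume "u \<in> {0..}"
      have "w (Suc (Suc k)) z u - 2*l*w (Suc k) z u + l^2 * w k z u = w k z u * (u - l)^2"
        by (simp add: k w_def power2_eq_square algebra_simps)
      thus "0 \<le> w (Suc (Suc k)) z u - 2*l*w (Suc k) z u + l^2 * w k z u"
        using w_nonneg[of u k z] \<open>u \<in> {0..}\<close> by simp
    qed
  qed
  define l where "l = F (Suc k) z / F k z"
  have pos: "F k z > 0" by (rule F_pos)
  have "0 \<le> F (Suc (Suc k)) z - 2*l*F (Suc k) z + l^2 * F k z" by (rule key)
  also have "\<dots> = (F (Suc (Suc k)) z * F k z - F (Suc k) z ^ 2) / F k z"
    using pos by (simp add: l_def field_simps power2_eq_square)
  finally show ?thesis using pos by (simp add: zero_le_divide_iff)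
qed

definition p :: "nat \<Rightarrow> real \<Rightarrow> real" where "p k z = F (Suc k) z / F k z"
definition phi :: "nat \<Rightarrow> real \<Rightarrow> real" where "phi k z = z * p k z"

lemma p_deriv:
  assumes "k \<ge> 1"
  shows "(p k has_real_derivative
     (F (Suc (Suc k)) z * F k z - F (Suc k) z * F (Suc k) z) / (F k z)^2) (at z)"
proof -
  have "F k z \<noteq> 0" using F_pos[of k z] by simp
  moreover have "Suc k \<ge> 1" by simp
  ultimately show ?thesis unfolding p_def[abs_def]
    by (auto intro!: derivative_eq_intros F_deriv assms simp: power2_eq_square)
qed

lemma p_deriv_nonneg:
  assumes "k \<ge> 1"
  shows "0 \<le> (F (Suc (Suc k)) z * F k z - F (Suc k) z * F (Suc k) z) / (F k z)^2"
  using F_CS[OF assms, of z] by (simp add: power2_eq_square)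

lemma p_pos: "0 < p k z" unfolding p_def using F_pos by simp

lemma p_mono:
  assumes "k \<ge> 1" "a \<le> b" shows "p k a \<le> p k b"
  using DERIV_nonneg_imp_nondecreasing[OF assms(2)] p_deriv[OF assms(1)] p_deriv_nonneg[OF assms(1)]
  by blast

lemma phi_deriv:
  assumes "k \<ge> 1"
  shows "(phi k has_real_derivative p k z + z *
     ((F (Suc (Suc k)) z * F k z - F (Suc k) z * F (Suc k) z) / (F k z)^2)) (at z)"
  unfolding phi_def[abs_def]
  by (rule derivative_eq_intros p_deriv[OF assms] refl)+ simp

lemma phi_strict:
  assumes "k \<ge> 1" "0 \<le> a" "a < b" shows "phi k a < phi k b"
proof (rule DERIV_pos_imp_increasing[OF assms(3)])
  fix x assume "a \<le> x" "x \<le> b"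
  hence x: "0 \<le> x" using assms by simp
  let ?D = "(F (Suc (Suc k)) x * F k x - F (Suc k) x * F (Suc k) x) / (F k x)^2"
  have "0 < p k x + x * ?D"
    using p_pos[of k x] p_deriv_nonneg[OF assms(1), of x] x by (metis add_pos_nonneg mult_nonneg_nonneg)
  thus "\<exists>y. (phi k has_real_derivative y) (at x) \<and> 0 < y"
    using phi_deriv[OF assms(1), of x] by blast
qed

lemma phi_cont: "k \<ge> 1 \<Longrightarrow> continuous_on S (phi k)"
  using phi_deriv by (meson DERIV_isCont continuous_at_imp_continuous_on)

lemma phi_exists:
  assumes "k \<ge> 1" shows "\<exists>B>0. phi k B = real k"
proof -
  define b where "b = (real k + 1) / p k 0"
  have b: "b > 0" using p_pos[of k 0] by (simp add: b_def)
  have "real k + 1 = b * p k 0" using p_pos[of k 0] by (simp add: b_def)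
  also have "\<dots> \<le> b * p k b" using b p_mono[OF assms, of 0 b] by (intro mult_left_mono) auto
  finally have "real k \<le> phi k b" by (simp add: phi_def)
  moreover have "phi k 0 \<le> real k" by (simp add: phi_def)
  ultimately obtain B where B: "0 \<le> B" "B \<le> b" "phi k B = real k"
    using IVT'[of "phi k" 0 "real k" b] b phi_cont[OF assms] by auto
  moreover have "B \<noteq> 0" using B assms by (auto simp: phi_def)
  ultimately show ?thesis by (intro exI[of _ B]) auto
qed

lemma Bstar_prop: "0 < Bstar n \<and> phi (2*n+1) (Bstar n) = real (2*n+1)"
proof -
  let ?q = "2*n+1"
  have q1: "?q \<ge> 1" by simp
  have eq: "(B > 0 \<and> real ?q - B * deriv (F ?q) B / F ?q B = 0) \<longleftrightarrow> (B > 0 \<and> phi ?q B = real ?q)" for B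
  proof -
    have "deriv (F ?q) B = F (Suc ?q) B" by (rule DERIV_imp_deriv[OF F_deriv[OF q1]])
    thus ?thesis by (auto simp: phi_def p_def)
  qed
  have ex1: "\<exists>!B. B > 0 \<and> phi ?q B = real ?q"
  proof (rule ex_ex1I)
    show "\<exists>B. B > 0 \<and> phi ?q B = real ?q" using phi_exists[OF q1] by blast
  next
    fix x y assume "x > 0 \<and> phi ?q x = real ?q" "y > 0 \<and> phi ?q y = real ?q"
    thus "x = y" using phi_strict[OF q1, of x y] phi_strict[OF q1, of y x]
      by (metis less_imp_le linorder_neqE_linordered_idom order_less_irrefl)
  qed
  have "Bstar n = (THE B. B > 0 \<and> phi ?q B = real ?q)"
    unfolding Bstar_def eq by simp
  thus ?thesis using theI'[OF ex1] by simp
qed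

lemma rho_le:
  assumes "0 \<le> z" "z \<le> Bstar n"
  shows "z^(2*n+1) * F (2*n+1) (Bstar n) \<le> (Bstar n)^(2*n+1) * F (2*n+1) z"
proof -
  let ?q = "2*n+1" and ?B = "Bstar n"
  have q1: "?q \<ge> 1" by simp
  define rho where "rho = (\<lambda>x. x^?q / F ?q x)"
  have "rho z \<le> rho ?B"
  proof (rule DERIV_nonneg_imp_nondecreasing[OF assms(2)])
    fix x assume x: "z \<le> x" "x \<le> ?B"
    have F0: "F ?q x > 0" by (rule F_pos)
    have hx: "x^(2*n) + 2*real n*x^(2*n - Suc 0)*x = (1+2*real n)*x^(2*n)"
    proof (cases "n = 0")
      case False
      hence e: "x^(2*n - Suc 0)*x = x^(2*n)" using power_minus_mult[of "2*n" x] by simp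
      show ?thesis by (simp only: mult.assoc e) (simp add: algebra_simps)
    qed simp
    have D: "(rho has_real_derivative
        (real ?q * x^(?q-1) * F ?q x - x^?q * F (Suc ?q) x) / (F ?q x)^2) (at x)"
      unfolding rho_def using F0
      by (auto intro!: derivative_eq_intros F_deriv simp: power2_eq_square hx)
    have "phi ?q x \<le> phi ?q ?B"
      using phi_strict[OF q1, of x ?B] x assms by (cases "x = ?B") auto
    hence ph: "phi ?q x \<le> real ?q" using Bstar_prop[of n] by simp
    have "x^?q * F (Suc ?q) x = x^(?q-1) * (phi ?q x * F ?q x)"
      using F0 by (simp add: phi_def p_def)
    also have "\<dots> \<le> x^(?q-1) * (real ?q * F ?q x)"
      using ph F0 x assms by (intro mult_left_mono mult_right_mono) auto
    finally have "0 \<le> real ?q * x^(?q-1) * F ?q x - x^?q * F (Suc ?q) x" by (simp add: mult_ac)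
    thus "\<exists>y. (rho has_real_derivative y) (at x) \<and> 0 \<le> y" using D by auto
  qed
  thus ?thesis using F_pos[of ?q z] F_pos[of ?q ?B] by (simp add: rho_def field_simps)
qed

theorem lemma4p4:
  fixes n :: nat and t x :: real
  assumes "0 \<le> t" and "t < 1"
  shows "Jstar n t x \<ge> g n t x"
proof (cases "\<bar>x\<bar> < Bstar n * sqrt (1 - t)")
  case False thus ?thesis by (simp add: Jstar_def)
next
  case True
  let ?q = "2*n+1"
  define B where "B = Bstar n"
  define s where "s = sqrt (1 - t)"
  define P where "P = (1 - t) powr (real n + 1/2)"
  define c where "c = B^?q / F ?q B"
  define y where "y = x / s"
  have s: "s > 0" using assms by (simp add: s_def)
  have B: "B > 0" using Bstar_prop[of n] by (simp add: B_def)
  have FB: "F ?q B > 0" by (rule F_pos)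
  have GB: "G ?q B > 0" unfolding G_def by (rule F_pos)
  have "P = (1 - t) powr real n * (1 - t) powr (1/2)"
    unfolding P_def by (rule powr_add)
  also have "\<dots> = (1 - t)^n * s"
    using assms by (simp add: powr_realpow powr_half_sqrt s_def)
  also have "\<dots> = s^?q"
    using assms by (simp add: s_def power_mult power2_eq_square[symmetric] power_add)
  finally have Ps: "P = s^?q" .
  have P: "P > 0" using Ps s by simp
  have xy: "x = s * y" using s by (simp add: y_def)
  have yB: "\<bar>y\<bar> < B" using True s by (simp add: y_def B_def s_def abs_div divide_less_eq)
  have jB: "j n B = c"
  proof -
    have "B^?q = c * F ?q B" using FB by (simp add: c_def)
    hence "j n B = (c * F ?q B + c * G ?q B) / (F ?q B + G ?q B)"
      by (simp add: j_def B_def c_def)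
    also have "\<dots> = c" using FB GB by (simp add: field_simps)
    finally show ?thesis .
  qed
  have J: "Jstar n t x = P * (F ?q y + G ?q y) * c"
    using True jB by (simp add: Jstar_def P_def y_def s_def B_def)
  have rho: "z^?q \<le> c * F ?q z" if "0 \<le> z" "z < B" for z
    using rho_le[of z n] that FB by (simp add: B_def c_def field_simps)
  have oddq: "(- y) ^ (2*n+1) = - (y ^ (2*n+1))" by (simp add: power_minus_odd)
  show ?thesis
  proof (cases "x \<le> 0")
    case xle: True
    have "x < Bstar n * s" using xle mult_pos_pos[OF B s] by (simp add: B_def)
    hence U: "U n t x = P * (c * F ?q y)"
      by (simp add: U_def P_def s_def y_def c_def B_def)
    have g: "g n t x = P * (c * F ?q y) - P * y^?q"
      using xle U Ps by (simp add: g_def xy power_mult_distrib)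
    have "y \<le> 0" using xle s by (simp add: y_def divide_le_0_iff)
    hence "(-y)^?q \<le> c * F ?q (-y)" using rho[of "-y"] yB by simp
    hence "0 \<le> c * G ?q y + y^?q" using oddq by (simp add: G_def)
    hence h0: "0 \<le> P * (c * G ?q y + y^?q)" using P by simp
    have "P * (F ?q y + G ?q y) * c - (P * (c * F ?q y) - P * y^?q) = P * (c * G ?q y + y^?q)"
      by (simp add: algebra_simps)
    hence "P * (c * F ?q y) - P * y^?q \<le> P * (F ?q y + G ?q y) * c" using h0 by linarith
    thus ?thesis using g J by simp
  next
    case xgt: False
    have "-x < Bstar n * s" using xgt B s by (simp add: B_def) (smt (verit) mult_pos_pos)
    hence U: "U n t (-x) = P * (c * G ?q y)"
      by (simp add: U_def P_def s_def y_def c_def B_def G_def)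
    have g: "g n t x = P * (c * G ?q y) + P * y^?q"
      using xgt U Ps by (simp add: g_def xy power_mult_distrib)
    have "y > 0" using xgt s by (simp add: y_def)
    hence "y^?q \<le> c * F ?q y" using rho[of y] yB by simp
    hence "P * y^?q \<le> P * (c * F ?q y)" using P by (intro mult_left_mono) auto
    thus ?thesis using g J by (simp add: algebra_simps)
  qed
qed

end
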